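(* Let $d,k\in\mathbb N^+$ and let $G=(V,E)$ be a graph. If $|V^G_{[1,d]}|>(d+1)(k-1)^2$, then $G$ has a $k$-edge induced subgraph.
   Context: All graphs are simple (finite, nonempty vertex set, undirected, no loops or multiple edges). $V^G_{[1,d]}:=\{v\in V: 1\le \deg(v)\le d\}$. A $k$-edge induced subgraph of $G$ is an induced subgraph $G[S]$ ($S\neq\emptyset$) with exactly $k$ edges. *)

theory Defs
  imports Main
begin

definition simple_graph :: "'a set \<Rightarrow> 'a set set \<Rightarrow> bool" where
  "simple_graph V E \<longleftrightarrow> finite V \<and> V \<noteq> {} \<and> (\<forall>e\<in>E. e \<subseteq> V \<and> card e = 2)"

definition degree :: "'a set set \<Rightarrow> 'a \<Rightarrow> nat" where
  "degree E v = card {e \<in> E. v \<in> e}"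

definition deg_range_verts :: "'a set \<Rightarrow> 'a set set \<Rightarrow> nat \<Rightarrow> 'a set" where
  "deg_range_verts V E d = {v \<in> V. 1 \<le> degree E v \<and> degree E v \<le> d}"

definition induced_edges :: "'a set set \<Rightarrow> 'a set \<Rightarrow> 'a set set" where
  "induced_edges E S = {e \<in> E. e \<subseteq> S}"

definition has_k_edge_induced_subgraph :: "'a set \<Rightarrow> 'a set set \<Rightarrow> nat \<Rightarrow> bool" where
  "has_k_edge_induced_subgraph V E k \<longleftrightarrow>
     (\<exists>S. S \<subseteq> V \<and> S \<noteq> {} \<and> card (induced_edges E S) = k)"

end

theory Submission
  imports Defs
begin

definition nbr :: "'a set set \<Rightarrow> 'a \<Rightarrow> 'a set" where
  "nbr E x = {y. {x,y} \<in> E}"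

lemma nbr_sym: "y \<in> nbr E x \<longleftrightarrow> x \<in> nbr E y"
  by (simp add: nbr_def insert_commute)

lemma indep_exists:
  assumes "finite A" "\<forall>x\<in>A. card (nbr E x \<inter> A) \<le> d"
  shows "\<exists>I\<subseteq>A. (\<forall>x\<in>I. \<forall>y\<in>I. x = y \<or> {x,y} \<notin> E) \<and> card A \<le> (d+1) * card I"
  using assms
proof (induction "card A" arbitrary: A rule: less_induct)
  case less
  show ?case
  proof (cases "A = {}")
    case True then show ?thesis by auto
  next
    case False
    then obtain x where x: "x \<in> A" by auto
    define A' where "A' = A - insert x (nbr E x)"
    have fA': "finite A'" using less.prems(1) by (simp add: A'_def)
    have "A' \<subset> A" using x by (auto simp: A'_def)
    then have lt: "card A' < card A" using less.prems(1) by (simp add: psubset_card_mono)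
    have deg': "\<forall>y\<in>A'. card (nbr E y \<inter> A') \<le> d"
    proof
      fix y assume y: "y \<in> A'"
      have "card (nbr E y \<inter> A') \<le> card (nbr E y \<inter> A)"
        by (rule card_mono) (use less.prems(1) in \<open>auto simp: A'_def\<close>)
      also have "\<dots> \<le> d" using less.prems(2) y by (auto simp: A'_def)
      finally show "card (nbr E y \<inter> A') \<le> d" .
    qed
    obtain I' where I': "I' \<subseteq> A'" "\<forall>x\<in>I'. \<forall>y\<in>I'. x = y \<or> {x,y} \<notin> E"
      "card A' \<le> (d+1) * card I'"
      using less.hyps[OF lt fA' deg'] by blast
    have xI': "x \<notin> I'" using I'(1) by (auto simp: A'_def)
    have fI': "finite I'" using I'(1) fA' finite_subset by blast
    have cI: "card (insert x I') = Suc (card I')" using xI' fI' by simp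
    have sub: "A \<subseteq> A' \<union> insert x (nbr E x \<inter> A)" by (auto simp: A'_def)
    have "card A \<le> card (A' \<union> insert x (nbr E x \<inter> A))"
      by (rule card_mono) (use less.prems(1) fA' sub in auto)
    also have "\<dots> \<le> card A' + card (insert x (nbr E x \<inter> A))" by (rule card_Un_le)
    also have "card (insert x (nbr E x \<inter> A)) \<le> Suc (card (nbr E x \<inter> A))"
      using less.prems(1) by (simp add: card_insert_if)
    also have "card (nbr E x \<inter> A) \<le> d" using less.prems(2) x by auto
    finally have cA: "card A \<le> card A' + Suc d" by simp
    have ind: "\<forall>a\<in>insert x I'. \<forall>b\<in>insert x I'. a = b \<or> {a,b} \<notin> E"
    proof (intro ballI)
      fix a b assume a: "a \<in> insert x I'" and b: "b \<in> insert x I'"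
      show "a = b \<or> {a,b} \<notin> E"
      proof (cases "a = x")
        case True
        then show ?thesis using b I'(1) by (auto simp: A'_def nbr_def)
      next
        case False
        note aI = this
        show ?thesis
        proof (cases "b = x")
          case True
          then show ?thesis using a aI I'(1) by (auto simp: A'_def nbr_def insert_commute)
        next
          case False
          then show ?thesis using a aI I'(2) b by auto
        qed
      qed
    qed
    have "card A \<le> (d+1) * card (insert x I')" using cA I'(3) cI by simp
    then show ?thesis using ind I'(1) x by (intro exI[of _ "insert x I'"]) (auto simp: A'_def)
  qed
qed

theorem lemma3p12:
  fixes V :: "'a set" and E :: "'a set set" and d k :: nat
  assumes "simple_graph V E" and "d \<ge> 1" and "k \<ge> 1"
    and "card (deg_range_verts V E d) > (d + 1) * (k - 1)^2"
  shows "has_k_edge_induced_subgraph V E k"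
proof -
  have fin: "finite V" and ed: "\<forall>e\<in>E. e \<subseteq> V \<and> card e = 2"
    using assms(1) by (auto simp: simple_graph_def)
  have "E \<subseteq> Pow V" using ed by auto
  then have finE: "finite E" using fin by (meson finite_Pow_iff rev_finite_subset)
  have noloop: "\<And>x. {x} \<notin> E" using ed by fastforce
  have ed2: "\<And>e. e \<in> E \<Longrightarrow> \<exists>a b. e = {a,b} \<and> a \<noteq> b" using ed card_2_iff by metis
  have nbrV: "\<And>x. nbr E x \<subseteq> V" using ed by (auto simp: nbr_def)
  have nbr_card: "\<And>x. card (nbr E x) \<le> degree E x"
  proof -
    fix x
    show "card (nbr E x) \<le> degree E x"
      unfolding degree_def
      by (rule card_inj_on_le[where f="\<lambda>y. {x,y}"])
         (use finE in \<open>auto simp: inj_on_def doubleton_eq_iff nbr_def\<close>)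
  qed
  define W where "W = deg_range_verts V E d"
  have WV: "W \<subseteq> V" by (auto simp: W_def deg_range_verts_def)
  have finW: "finite W" using WV fin finite_subset by blast
  have Wdeg: "\<forall>x\<in>W. card (nbr E x \<inter> W) \<le> d"
  proof
    fix x assume x: "x \<in> W"
    have "card (nbr E x \<inter> W) \<le> card (nbr E x)"
      by (rule card_mono) (use finite_subset[OF nbrV fin] in auto)
    also have "\<dots> \<le> degree E x" by (rule nbr_card)
    also have "\<dots> \<le> d" using x by (auto simp: W_def deg_range_verts_def)
    finally show "card (nbr E x \<inter> W) \<le> d" .
  qed
  obtain T where T: "T \<subseteq> W" "\<forall>x\<in>T. \<forall>y\<in>T. x = y \<or> {x,y} \<notin> E"
    "card W \<le> (d+1) * card T"
    using indep_exists[OF finW Wdeg] by blast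
  have indepT: "\<forall>x\<in>T. \<forall>y\<in>T. {x,y} \<notin> E" using T(2) noloop by fastforce
  have TV: "T \<subseteq> V" using T(1) WV by auto
  have Tbig: "(k-1)^2 < card T"
  proof -
    have "(d+1) * (k-1)^2 < (d+1) * card T" using assms(4) T(3) unfolding W_def by (meson less_le_trans)
    then show ?thesis using mult_less_cancel1 by blast
  qed
  have Tnb: "\<forall>t\<in>T. nbr E t \<noteq> {}"
  proof
    fix t assume t: "t \<in> T"
    then have "degree E t \<ge> 1" using T(1) by (auto simp: W_def deg_range_verts_def)
    then have "{e \<in> E. t \<in> e} \<noteq> {}" unfolding degree_def by (metis card.empty not_one_le_zero)
    then obtain e where e: "e \<in> E" "t \<in> e" by auto
    obtain a b where ab: "e = {a,b}" "a \<noteq> b" using ed2[OF e(1)] by blast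
    show "nbr E t \<noteq> {}"
    proof (cases "t = a")
      case True then have "b \<in> nbr E t" using e ab by (auto simp: nbr_def)
      then show ?thesis by auto
    next
      case False then have "t = b" using e ab by auto
      then have "a \<in> nbr E t" using e ab by (auto simp: nbr_def insert_commute)
      then show ?thesis by auto
    qed
  qed
  show ?thesis
  proof (cases "\<exists>u. k \<le> card (nbr E u \<inter> T)")
    case True
    then obtain u where u: "k \<le> card (nbr E u \<inter> T)" by auto
    obtain L where L: "L \<subseteq> nbr E u \<inter> T" "card L = k" "finite L"
      using obtain_subset_with_card_n[OF u] by metis
    have uL: "u \<notin> L" using L(1) noloop by (auto simp: nbr_def)
    have ie: "induced_edges E (insert u L) = (\<lambda>l. {u,l}) ` L"
    proof
      show "induced_edges E (insert u L) \<subseteq> (\<lambda>l. {u,l}) ` L"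
      proof
        fix e assume e: "e \<in> induced_edges E (insert u L)"
        then have eE: "e \<in> E" "e \<subseteq> insert u L" by (auto simp: induced_edges_def)
        obtain a b where ab: "e = {a,b}" "a \<noteq> b" using ed2[OF eE(1)] by blast
        show "e \<in> (\<lambda>l. {u,l}) ` L"
        proof (cases "a = u")
          case True then show ?thesis using ab eE by auto
        next
          case False
          note na = this
          show ?thesis
          proof (cases "b = u")
            case True then show ?thesis using ab eE by (auto simp: insert_commute)
          next
            case False
            then have "a \<in> T" "b \<in> T" using na ab eE L(1) by auto
            then show ?thesis using indepT ab eE by auto
          qed
        qed
      qed
      show "(\<lambda>l. {u,l}) ` L \<subseteq> induced_edges E (insert u L)"
        using L(1) by (auto simp: induced_edges_def nbr_def)
    qed
    have inj: "inj_on (\<lambda>l. {u,l}) L" by (auto simp: inj_on_def doubleton_eq_iff)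
    have ck: "card (induced_edges E (insert u L)) = k"
      using ie card_image[OF inj] L(2) by simp
    have "L \<noteq> {}" using L(2) assms(3) by auto
    then obtain l where "l \<in> L" by auto
    then have "{u,l} \<in> E" using L(1) by (auto simp: nbr_def)
    then have "u \<in> V" using ed by blast
    then have "insert u L \<subseteq> V" using L(1) TV by auto
    then show ?thesis using ck unfolding has_k_edge_induced_subgraph_def by blast
  next
    case False
    have small: "\<And>u. card (nbr E u \<inter> T) \<le> k - 1"
    proof -
      fix u
      have "card (nbr E u \<inter> T) < k" using False not_le by blast
      then show "card (nbr E u \<inter> T) \<le> k - 1" by arith
    qed
    define P where "P U \<longleftrightarrow> U \<subseteq> V \<and> (\<forall>t\<in>T. nbr E t \<inter> U \<noteq> {})" for U
    have PV: "P V" using Tnb nbrV by (auto simp: P_def Int_absorb2)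
    obtain U where U: "P U" and Umin: "\<forall>U'. P U' \<longrightarrow> card U \<le> card U'"
      using ex_has_least_nat[of P V card, OF PV] by blast
    have UV: "U \<subseteq> V" using U by (simp add: P_def)
    have finU: "finite U" using UV fin finite_subset by blast
    have priv: "\<forall>u\<in>U. \<exists>t. t \<in> T \<and> nbr E t \<inter> U = {u}"
    proof
      fix u assume u: "u \<in> U"
      have "card (U - {u}) < card U" using finU u by (rule card_Diff1_less)
      then have "\<not> P (U - {u})" using Umin by (meson not_le)
      then obtain t where t: "t \<in> T" "nbr E t \<inter> (U - {u}) = {}" using UV by (auto simp: P_def)
      have "nbr E t \<inter> U \<noteq> {}" using U t(1) by (auto simp: P_def)
      then have "nbr E t \<inter> U = {u}" using t(2) by blast
      then show "\<exists>t. t \<in> T \<and> nbr E t \<inter> U = {u}" using t(1) by blast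
    qed
    obtain pv where pv: "\<forall>u\<in>U. pv u \<in> T \<and> nbr E (pv u) \<inter> U = {u}"
      using bchoice[OF priv] by blast
    have pvE: "\<And>u. u \<in> U \<Longrightarrow> {u, pv u} \<in> E"
    proof -
      fix u assume "u \<in> U"
      then have "u \<in> nbr E (pv u)" using pv by blast
      then show "{u, pv u} \<in> E" by (simp add: nbr_def insert_commute)
    qed
    have UT: "U \<inter> T = {}"
    proof (rule ccontr)
      assume "U \<inter> T \<noteq> {}"
      then obtain u where "u \<in> U" "u \<in> T" by auto
      then show False using pvE[of u] pv indepT by blast
    qed
    have "T \<subseteq> (\<Union>u\<in>U. nbr E u \<inter> T)"
    proof
      fix t assume t: "t \<in> T"
      then obtain u where "u \<in> nbr E t" "u \<in> U" using U by (auto simp: P_def)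
      then show "t \<in> (\<Union>u\<in>U. nbr E u \<inter> T)" using t nbr_sym by fastforce
    qed
    then have "card T \<le> card (\<Union>u\<in>U. nbr E u \<inter> T)"
      by (rule card_mono[rotated]) (use finU TV fin finite_subset in auto)
    also have "\<dots> \<le> (\<Sum>u\<in>U. card (nbr E u \<inter> T))" using finU by (rule card_UN_le)
    also have "\<dots> \<le> card U * (k - 1)" using small sum_bounded_above[of U "\<lambda>u. card (nbr E u \<inter> T)" "k-1"] by simp
    finally have cT: "card T \<le> card U * (k - 1)" .
    have "(k-1) * (k-1) < card U * (k - 1)" using Tbig cT unfolding power2_eq_square by (rule less_le_trans)
    then have "k - 1 < card U" using mult_less_cancel2 by blast
    then have kU: "k \<le> card U" by arith
    define Q where "Q C \<longleftrightarrow> C \<subseteq> U \<and> card (induced_edges E C) \<le> k" for C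
    have ie0: "induced_edges E {} = {}" using noloop ed2 by (auto simp: induced_edges_def) 
    have Q0: "Q {}" using ie0 by (simp add: Q_def)
    have Qb: "\<forall>C. Q C \<longrightarrow> card C < Suc (card U)"
      using finU by (auto simp: Q_def card_mono less_Suc_eq_le)
    obtain C where C: "Q C" and Cmax: "\<forall>C'. Q C' \<longrightarrow> card C' \<le> card C"
      using ex_has_greatest_nat[OF Q0 Qb] by blast
    have CU: "C \<subseteq> U" and Ck: "card (induced_edges E C) \<le> k" using C by (auto simp: Q_def)
    have finC: "finite C" using CU finU finite_subset by blast
    have finie: "\<And>S. finite (induced_edges E S)" using finE by (simp add: induced_edges_def)
    have key: "k \<le> card (induced_edges E C) + card C"
    proof (cases "C = U")
      case True then show ?thesis using kU by simp
    next
      case False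
      then obtain x where x: "x \<in> U" "x \<notin> C" using CU by blast
      have "card (insert x C) = Suc (card C)" using x finC by simp
      then have "\<not> Q (insert x C)" using Cmax by (metis Suc_n_not_le_n)
      then have gt: "k < card (induced_edges E (insert x C))" using x CU by (auto simp: Q_def)
      have sub: "induced_edges E (insert x C) \<subseteq> induced_edges E C \<union> (\<lambda>c. {x,c}) ` C"
      proof
        fix e assume e: "e \<in> induced_edges E (insert x C)"
        then have eE: "e \<in> E" "e \<subseteq> insert x C" by (auto simp: induced_edges_def)
        obtain a b where ab: "e = {a,b}" "a \<noteq> b" using ed2[OF eE(1)] by blast
        show "e \<in> induced_edges E C \<union> (\<lambda>c. {x,c}) ` C"
        proof (cases "x \<in> e")
          case False then show ?thesis using eE by (auto simp: induced_edges_def)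
        next
          case True
          then show ?thesis using ab eE by (auto simp: insert_commute)
        qed
      qed
      have "card (induced_edges E (insert x C)) \<le> card (induced_edges E C \<union> (\<lambda>c. {x,c}) ` C)"
        by (rule card_mono[OF _ sub]) (use finie finC in auto)
      also have "\<dots> \<le> card (induced_edges E C) + card ((\<lambda>c. {x,c}) ` C)" by (rule card_Un_le)
      also have "\<dots> \<le> card (induced_edges E C) + card C" using card_image_le[OF finC] by simp
      finally show ?thesis using gt by simp
    qed
    define m where "m = k - card (induced_edges E C)"
    have mC: "m \<le> card C" using key by (simp add: m_def)
    obtain C' where C': "C' \<subseteq> C" "card C' = m" "finite C'"
      using obtain_subset_with_card_n[OF mC] by metis
    define S where "S = C \<union> pv ` C'"
    have ieS: "induced_edges E S = induced_edges E C \<union> (\<lambda>c. {c, pv c}) ` C'"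
    proof
      show "induced_edges E S \<subseteq> induced_edges E C \<union> (\<lambda>c. {c, pv c}) ` C'"
      proof
        fix e assume e: "e \<in> induced_edges E S"
        then have eE: "e \<in> E" "e \<subseteq> S" by (auto simp: induced_edges_def)
        obtain a b where ab: "e = {a,b}" "a \<noteq> b" using ed2[OF eE(1)] by blast
        have aS: "a \<in> S" and bS: "b \<in> S" using ab eE by auto
        show "e \<in> induced_edges E C \<union> (\<lambda>c. {c, pv c}) ` C'"
        proof (cases "a \<in> C")
          case aC: True
          show ?thesis
          proof (cases "b \<in> C")
            case True then show ?thesis using aC ab eE by (auto simp: induced_edges_def)
          next
            case False
            then obtain c where c: "c \<in> C'" "b = pv c" using bS S_def by auto
            have "a \<in> nbr E (pv c)" using eE ab c by (simp add: nbr_def insert_commute)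
            then have "a \<in> nbr E (pv c) \<inter> U" using aC CU by auto
            then have "a = c" using pv c C'(1) CU by blast
            then show ?thesis using ab c by auto
          qed
        next
          case aC: False
          then obtain c where c: "c \<in> C'" "a = pv c" using aS S_def by auto
          show ?thesis
          proof (cases "b \<in> C")
            case True
            have "b \<in> nbr E (pv c)" using eE ab c by (simp add: nbr_def)
            then have "b \<in> nbr E (pv c) \<inter> U" using True CU by auto
            then have "b = c" using pv c C'(1) CU by blast
            then show ?thesis using ab c by (auto simp: insert_commute)
          next
            case False
            then obtain c2 where c2: "c2 \<in> C'" "b = pv c2" using bS S_def by auto
            have "a \<in> T" "b \<in> T" using c c2 pv C'(1) CU by auto
            then show ?thesis using indepT ab eE by auto
          qed
        qed
      qed
      show "induced_edges E C \<union> (\<lambda>c. {c, pv c}) ` C' \<subseteq> induced_edges E S"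
        using pvE C'(1) CU by (auto simp: induced_edges_def S_def)
    qed
    have disj: "induced_edges E C \<inter> (\<lambda>c. {c, pv c}) ` C' = {}"
    proof (rule ccontr)
      assume "induced_edges E C \<inter> (\<lambda>c. {c, pv c}) ` C' \<noteq> {}"
      then obtain c where c: "c \<in> C'" "{c, pv c} \<subseteq> C" by (auto simp: induced_edges_def)
      then have "pv c \<in> U" "pv c \<in> T" using CU pv C'(1) by auto
      then show False using UT by auto
    qed
    have inj: "inj_on (\<lambda>c. {c, pv c}) C'"
    proof (rule inj_onI)
      fix c c' assume c: "c \<in> C'" "c' \<in> C'" "{c, pv c} = {c', pv c'}"
      have "c \<in> U" "c' \<in> U" "pv c' \<in> T" using c C'(1) CU pv by auto
      then have "c \<noteq> pv c'" using UT by auto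
      then show "c = c'" using c(3) by (auto simp: doubleton_eq_iff)
    qed
    have "card (induced_edges E S) = card (induced_edges E C) + card ((\<lambda>c. {c, pv c}) ` C')"
      unfolding ieS by (rule card_Un_disjoint) (use finie C'(3) disj in auto)
    also have "\<dots> = k" using card_image[OF inj] C'(2) m_def Ck by simp
    finally have ck: "card (induced_edges E S) = k" .
    have SV: "S \<subseteq> V" using CU UV pv C'(1) TV by (fastforce simp: S_def)
    have "S \<noteq> {}" using ck ie0 assms(3) by auto
    then show ?thesis using ck SV unfolding has_k_edge_induced_subgraph_def by blast
  qed
qed

end
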